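(* Let $g\ne0$ be a real $M_1\times M_2$ matrix with singular value decomposition $g=VSW^T$, let $d$ be the multiplicity of the largest singular value $\|g\|_2$, and let $V^d,W^d$ be as in the context. If $$\|V^d_{i,*}\|=\sqrt{d/M_1}\ \ \forall i\in\{1,\dots,M_1\}\quad\text{and}\quad \|W^d_{j,*}\|=\sqrt{d/M_2}\ \ \forall j\in\{1,\dots,M_2\},$$ then there exist finite-dimensional Hilbert spaces $\mathcal H_1,\mathcal H_2$, a state $\rho$ on $\mathcal H_1\otimes\mathcal H_2$ and observables $\mathcal A_i(x_i)$ (Hermitian, eigenvalues in $[-1,1]$) with $\sum_{x_1,x_2} g_{x_1,x_2}\operatorname{tr}(\rho\,\mathcal A_1(x_1)\otimes\mathcal A_2(x_2))=\sqrt{M_1M_2}\,\|g\|_2$; i.e. the bound of Theorem 1 is tight for $g$.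
   Context: $\|g\|_2$ is the largest singular value of $g$. Singular value decomposition: $V$ orthogonal $M_1\times M_1$, $W$ orthogonal $M_2\times M_2$, $S$ diagonal $M_1\times M_2$ with nonnegative nonincreasing diagonal, $g=VSW^T$. $V^d$ (resp. $W^d$) consists of the first $d$ columns of $V$ (resp. $W$); $A_{i,*}$ denotes the $i$-th row of a matrix $A$ as a column vector. Theorem 1 states $\sum_{x_1,x_2}g_{x_1,x_2}E(x_1,x_2)\le\sqrt{M_1M_2}\|g\|_2$ for all quantum strategies. *)

theory Defs
  imports "Jordan_Normal_Form.Schur_Decomposition" "Jordan_Normal_Form.Char_Poly"
begin

text \<open>Finite-dimensional Hilbert spaces are modelled as C^n, operators as complex n x n matrices.\<close>

definition hermitian_mat :: "complex mat \<Rightarrow> bool" where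
  "hermitian_mat A \<longleftrightarrow> A \<in> carrier_mat (dim_row A) (dim_row A) \<and> mat_adjoint A = A"

definition observable :: "nat \<Rightarrow> complex mat \<Rightarrow> bool" where
  "observable n A \<longleftrightarrow> A \<in> carrier_mat n n \<and> hermitian_mat A \<and>
     (\<forall>k. eigenvalue A k \<longrightarrow> k \<in> complex_of_real ` {-1..1})"

definition psd_mat :: "nat \<Rightarrow> complex mat \<Rightarrow> bool" where
  "psd_mat n A \<longleftrightarrow> A \<in> carrier_mat n n \<and> hermitian_mat A \<and>
     (\<forall>v \<in> carrier_vec n. conjugate v \<bullet> (A *\<^sub>v v) \<in> complex_of_real ` {0..})"

definition mat_trace :: "'a :: comm_monoid_add mat \<Rightarrow> 'a" where
  "mat_trace A = (\<Sum>i<dim_row A. A $$ (i,i))"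

definition density_mat :: "nat \<Rightarrow> complex mat \<Rightarrow> bool" where
  "density_mat n \<rho> \<longleftrightarrow> psd_mat n \<rho> \<and> mat_trace \<rho> = 1"

text \<open>Kronecker (tensor) product of matrices; C^n1 \<otimes> C^n2 = C^(n1*n2).\<close>
definition kron :: "'a :: times mat \<Rightarrow> 'a mat \<Rightarrow> 'a mat" where
  "kron A B = mat (dim_row A * dim_row B) (dim_col A * dim_col B)
     (\<lambda>(i,j). A $$ (i div dim_row B, j div dim_col B) * B $$ (i mod dim_row B, j mod dim_col B))"

definition orthogonal_real_mat :: "nat \<Rightarrow> real mat \<Rightarrow> bool" where
  "orthogonal_real_mat n V \<longleftrightarrow> V \<in> carrier_mat n n \<and>
     V * transpose_mat V = 1\<^sub>m n \<and> transpose_mat V * V = 1\<^sub>m n"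

definition is_svd :: "nat \<Rightarrow> nat \<Rightarrow> real mat \<Rightarrow> real mat \<Rightarrow> real mat \<Rightarrow> real mat \<Rightarrow> bool" where
  "is_svd M1 M2 g V S W \<longleftrightarrow>
     orthogonal_real_mat M1 V \<and> orthogonal_real_mat M2 W \<and> S \<in> carrier_mat M1 M2 \<and>
     (\<forall>i<M1. \<forall>j<M2. i \<noteq> j \<longrightarrow> S $$ (i,j) = 0) \<and>
     (\<forall>i<min M1 M2. 0 \<le> S $$ (i,i)) \<and>
     (\<forall>i j. i \<le> j \<longrightarrow> j < min M1 M2 \<longrightarrow> S $$ (j,j) \<le> S $$ (i,i)) \<and>
     g = V * S * transpose_mat W"

text \<open>Norm of the i-th row of the matrix consisting of the first d columns of V.\<close>
definition row_norm_first :: "nat \<Rightarrow> real mat \<Rightarrow> nat \<Rightarrow> real" where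
  "row_norm_first d V i = sqrt (\<Sum>k<d. (V $$ (i,k))\<^sup>2)"

end

theory Submission
  imports Defs
begin

definition sg :: "nat \<Rightarrow> nat \<Rightarrow> complex" where
  "sg k a = (-1) ^ card {j. j < k \<and> bit a j}"

lemma flip_less: "a < 2^d \<Longrightarrow> k < d \<Longrightarrow> flip_bit k (a::nat) < 2^d"
proof -
  assume a: "a < 2^d" and k: "k < d"
  have "take_bit d a = a" using a by (simp add: take_bit_nat_eq_self_iff)
  then have "take_bit d (flip_bit k a) = flip_bit k a" using k by (simp add: take_bit_flip_bit_eq)
  then show ?thesis by (simp add: take_bit_nat_eq_self_iff)
qed

lemma flip_flip[simp]: "flip_bit k (flip_bit k (a::nat)) = a"
  by (rule bit_eqI) (auto simp: bit_flip_bit_iff)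

lemma flip_comm: "flip_bit l (flip_bit k (a::nat)) = flip_bit k (flip_bit l a)"
  by (rule bit_eqI) (auto simp: bit_flip_bit_iff)

lemma flip_neq[simp]: "flip_bit k (a::nat) \<noteq> a"
proof
  assume "flip_bit k a = a"
  then have "bit (flip_bit k a) k = bit a k" by simp
  then show False by (simp add: bit_flip_bit_iff)
qed

lemma flip_inj: "flip_bit k (a::nat) = flip_bit l a \<Longrightarrow> k = l"
proof (rule ccontr)
  assume e: "flip_bit k a = flip_bit l a" and "k \<noteq> l"
  then have "bit (flip_bit k a) k = bit (flip_bit l a) k" by simp
  then show False using \<open>k \<noteq> l\<close> by (simp add: bit_flip_bit_iff)
qed

lemma flip2_eq: "flip_bit l (flip_bit k (a::nat)) = a \<longleftrightarrow> k = l"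
  by (metis flip_flip flip_inj)

lemma sg_flip_ge: "k \<le> j \<Longrightarrow> sg k (flip_bit j a) = sg k a"
proof -
  assume "k \<le> j"
  then have "{i. i < k \<and> bit (flip_bit j a) i} = {i. i < k \<and> bit a i}"
    by (auto simp: bit_flip_bit_iff)
  then show ?thesis by (simp add: sg_def)
qed

lemma sg_flip_lt: "j < k \<Longrightarrow> sg k (flip_bit j a) = - sg k a"
proof -
  assume jk: "j < k"
  let ?B = "{i. i < k \<and> bit a i}"
  have fin: "finite ?B" by simp
  show ?thesis
  proof (cases "bit a j")
    case True
    then have "{i. i < k \<and> bit (flip_bit j a) i} = ?B - {j}"
      by (auto simp: bit_flip_bit_iff)
    moreover have "j \<in> ?B" using True jk by simp
    ultimately have "card {i. i < k \<and> bit (flip_bit j a) i} = card ?B - 1" by simp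
    moreover have "card ?B \<ge> 1" using \<open>j \<in> ?B\<close> fin
      by (metis One_nat_def Suc_leI card_gt_0_iff empty_iff)
    ultimately show ?thesis unfolding sg_def
      by (simp add: power_diff)
  next
    case False
    then have "{i. i < k \<and> bit (flip_bit j a) i} = insert j ?B"
      using jk by (auto simp: bit_flip_bit_iff)
    moreover have "j \<notin> ?B" using False by simp
    ultimately have "card {i. i < k \<and> bit (flip_bit j a) i} = Suc (card ?B)" by simp
    then show ?thesis unfolding sg_def by simp
  qed
qed

lemma sg_sq[simp]: "sg k a * sg k a = 1"
  unfolding sg_def by (simp add: power_mult_distrib[symmetric])

definition G :: "nat \<Rightarrow> nat \<Rightarrow> nat \<Rightarrow> complex" where
  "G k a b = (if b = flip_bit k a then sg k a else 0)"

definition Am :: "nat \<Rightarrow> (nat \<Rightarrow> complex) \<Rightarrow> complex mat" where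
  "Am d u = mat (2^d) (2^d) (\<lambda>(a,b). \<Sum>k<d. u k * G k a b)"

lemma G_sym: "G k a b = G k b a"
proof (cases "b = flip_bit k a")
  case True
  then have "a = flip_bit k b" by simp
  moreover have "sg k b = sg k a" using True sg_flip_ge[of k k a] by simp
  ultimately show ?thesis unfolding G_def using True by simp
next
  case False
  then have "a \<noteq> flip_bit k b" by auto
  then show ?thesis unfolding G_def using False by simp
qed

lemma sum_G: "a < 2^d \<Longrightarrow> k < d \<Longrightarrow> (\<Sum>b\<in>{0..<2^d}. G k a b * f b) = sg k a * f (flip_bit k a)"
proof -
  assume a: "a < 2^d" and k: "k < d"
  have "(\<Sum>b\<in>{0..<2^d}. G k a b * f b) = (\<Sum>b\<in>{0..<2^d}. if b = flip_bit k a then sg k a * f b else 0)"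
    unfolding G_def by (rule sum.cong) auto
  also have "\<dots> = sg k a * f (flip_bit k a)"
    using flip_less[OF a k] by (simp add: sum.delta')
  finally show ?thesis .
qed

lemma antisym_sum_zero:
  fixes T :: "nat \<Rightarrow> nat \<Rightarrow> complex"
  assumes "\<And>k l. T k l = - T l k"
  shows "(\<Sum>k<d. \<Sum>l<d. T k l) = 0"
proof -
  have "(\<Sum>k<d. \<Sum>l<d. T k l) = (\<Sum>l<d. \<Sum>k<d. T k l)" by (rule sum.swap)
  also have "\<dots> = (\<Sum>l<d. \<Sum>k<d. - T l k)"
    by (rule sum.cong[OF refl], rule sum.cong[OF refl], rule assms)
  also have "\<dots> = - (\<Sum>k<d. \<Sum>l<d. T k l)" by (simp add: sum_negf)
  finally show ?thesis by simp
qed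

lemma Am_carrier: "Am d u \<in> carrier_mat (2^d) (2^d)"
  unfolding Am_def by simp

lemma Am_sq:
  assumes u1: "(\<Sum>k<d. u k * u k) = 1"
  shows "Am d u * Am d u = 1\<^sub>m (2^d)"
proof (rule eq_matI)
  fix a c assume a: "a < dim_row (1\<^sub>m (2^d) :: complex mat)" and c: "c < dim_col (1\<^sub>m (2^d) :: complex mat)"
  then have a: "a < 2^d" and c: "c < 2^d" by auto
  define T where "T k l = sg k a * G l (flip_bit k a) c" for k l
  have "(Am d u * Am d u) $$ (a,c) = (\<Sum>b\<in>{0..<2^d}. (\<Sum>k<d. u k * G k a b) * (\<Sum>l<d. u l * G l b c))"
    using a c unfolding Am_def by (simp add: scalar_prod_def)
  also have "\<dots> = (\<Sum>k<d. \<Sum>l<d. \<Sum>b\<in>{0..<2^d}. u k * u l * (G k a b * G l b c))"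
  proof -
    have "(\<Sum>b\<in>{0..<2^d}. (\<Sum>k<d. u k * G k a b) * (\<Sum>l<d. u l * G l b c))
       = (\<Sum>b\<in>{0..<2^d}. \<Sum>k<d. \<Sum>l<d. u k * u l * (G k a b * G l b c))"
      unfolding sum_product by (intro sum.cong refl) (simp add: mult_ac)
    also have "\<dots> = (\<Sum>k<d. \<Sum>b\<in>{0..<2^d}. \<Sum>l<d. u k * u l * (G k a b * G l b c))"
      by (rule sum.swap)
    also have "\<dots> = (\<Sum>k<d. \<Sum>l<d. \<Sum>b\<in>{0..<2^d}. u k * u l * (G k a b * G l b c))"
      by (rule sum.cong[OF refl]) (rule sum.swap)
    finally show ?thesis .
  qed
  also have "\<dots> = (\<Sum>k<d. \<Sum>l<d. u k * u l * T k l)"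
  proof (rule sum.cong[OF refl], rule sum.cong[OF refl])
    fix k l assume k: "k \<in> {..<d}"
    have "(\<Sum>b\<in>{0..<2^d}. u k * u l * (G k a b * G l b c)) = u k * u l * (\<Sum>b\<in>{0..<2^d}. G k a b * G l b c)"
      by (rule sum_distrib_left[symmetric])
    also have "\<dots> = u k * u l * T k l"
      unfolding T_def using sum_G[OF a, of k "\<lambda>b. G l b c"] k by simp
    finally show "(\<Sum>b\<in>{0..<2^d}. u k * u l * (G k a b * G l b c)) = u k * u l * T k l" .
  qed
  also have "\<dots> = 1\<^sub>m (2^d) $$ (a,c)"
  proof (cases "a = c")
    case True
    have Teq: "T k l = (if k = l then 1 else 0)" for k l
      unfolding T_def G_def using True flip2_eq[of l k c] sg_flip_ge[of k k c] by auto
    then have "(\<Sum>l<d. u k * u l * T k l) = u k * u k" if "k < d" for k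
    proof -
      have "(\<Sum>l<d. u k * u l * T k l) = (\<Sum>l<d. if k = l then u k * u l else 0)"
        by (intro sum.cong refl) (simp add: Teq)
      also have "\<dots> = u k * u k" using that by (simp add: sum.delta)
      finally show ?thesis .
    qed
    then have "(\<Sum>k<d. \<Sum>l<d. u k * u l * T k l) = (\<Sum>k<d. u k * u k)"
      by (intro sum.cong) auto
    then show ?thesis using u1 a c True by simp
  next
    case False
    have "u k * u l * T k l = - (u l * u k * T l k)" for k l
    proof -
      have "T k l = - T l k"
      proof (cases k l rule: linorder_cases)
        case less
        have e: "flip_bit k (flip_bit l a) = flip_bit l (flip_bit k a)" by (rule flip_comm)
        have s1: "sg k (flip_bit l a) = sg k a" using less by (simp add: sg_flip_ge)
        have s2: "sg l (flip_bit k a) = - sg l a" using less by (rule sg_flip_lt)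
        show ?thesis unfolding T_def G_def e s1 s2 by simp
      next
        case equal
        then show ?thesis unfolding T_def G_def using False by auto
      next
        case greater
        have e: "flip_bit k (flip_bit l a) = flip_bit l (flip_bit k a)" by (rule flip_comm)
        have s1: "sg l (flip_bit k a) = sg l a" using greater by (simp add: sg_flip_ge)
        have s2: "sg k (flip_bit l a) = - sg k a" using greater by (rule sg_flip_lt)
        show ?thesis unfolding T_def G_def e s1 s2 by simp
      qed
      then show ?thesis by simp
    qed
    then have "(\<Sum>k<d. \<Sum>l<d. u k * u l * T k l) = 0" by (rule antisym_sum_zero)
    then show ?thesis using False a c by simp
  qed
  finally show "(Am d u * Am d u) $$ (a,c) = 1\<^sub>m (2^d) $$ (a,c)" .
qed (auto simp: Am_def)

lemma sq_one_eigen: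
  fixes A :: "complex mat"
  assumes A: "A \<in> carrier_mat n n" and AA: "A * A = 1\<^sub>m n" and ev: "eigenvalue A k"
  shows "k \<in> complex_of_real ` {-1..1}"
proof -
  from ev obtain v where v: "v \<in> carrier_vec n" "v \<noteq> 0\<^sub>v n" "A *\<^sub>v v = k \<cdot>\<^sub>v v"
    unfolding eigenvalue_def eigenvector_def using A by auto
  have "v = (A * A) *\<^sub>v v" using AA v by simp
  also have "\<dots> = A *\<^sub>v (A *\<^sub>v v)" using A v by simp
  also have "\<dots> = k \<cdot>\<^sub>v (k \<cdot>\<^sub>v v)" using v A by (simp add: mult_mat_vec)
  finally have vv: "v = k \<cdot>\<^sub>v (k \<cdot>\<^sub>v v)" .
  from v obtain i where i: "i < n" "v $ i \<noteq> 0"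
  proof -
    have "\<exists>i<n. v $ i \<noteq> 0"
    proof (rule ccontr)
      assume "\<not> ?thesis"
      then have "v = 0\<^sub>v n" using v(1) by (intro eq_vecI) auto
      with v(2) show False by simp
    qed
    then show ?thesis using that by blast
  qed
  have "v $ i = k * (k * v $ i)" using arg_cong[OF vv, of "\<lambda>w. w $ i"] i v by simp
  then have "(k * k - 1) * v $ i = 0" by (simp add: algebra_simps)
  then have "k * k = 1" using i by simp
  then have "k = 1 \<or> k = -1" using square_eq_1_iff by blast
  then show ?thesis
  proof
    assume "k = 1"
    then show ?thesis by (intro image_eqI[where x=1]) auto
  next
    assume "k = -1"
    then show ?thesis by (intro image_eqI[where x="-1"]) auto
  qed
qed

lemma herm_I:
  fixes A :: "complex mat"
  assumes A: "A \<in> carrier_mat n n" and h: "\<And>i j. i < n \<Longrightarrow> j < n \<Longrightarrow> cnj (A $$ (j,i)) = A $$ (i,j)"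
  shows "hermitian_mat A"
  unfolding hermitian_mat_def
proof (intro conjI)
  show "A \<in> carrier_mat (dim_row A) (dim_row A)" using A by simp
  show "mat_adjoint A = A"
    unfolding mat_adjoint_def
    by (rule eq_matI) (use A h in \<open>auto simp: mat_of_rows_index\<close>)
qed

lemma Am_herm:
  assumes "\<And>k. cnj (u k) = u k"
  shows "hermitian_mat (Am d u)"
proof (rule herm_I[OF Am_carrier])
  fix i j :: nat assume "i < 2^d" "j < 2^d"
  have cs: "cnj (sg k a) = sg k a" for k a unfolding sg_def by simp
  have "cnj (G k j i) = G k i j" for k
    unfolding G_sym[of k j i] unfolding G_def using cs by simp
  then show "cnj (Am d u $$ (j, i)) = Am d u $$ (i, j)"
    using \<open>i < 2^d\<close> \<open>j < 2^d\<close> assms unfolding Am_def by simp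
qed

lemma Am_obs:
  assumes "\<And>k. cnj (u k) = u k" and "(\<Sum>k<d. u k * u k) = 1"
  shows "observable (2^d) (Am d u)"
  unfolding observable_def
proof (intro conjI allI impI)
  show "Am d u \<in> carrier_mat (2 ^ d) (2 ^ d)" by (rule Am_carrier)
  show "hermitian_mat (Am d u)" by (rule Am_herm[OF assms(1)])
  fix k assume "eigenvalue (Am d u) k"
  then show "k \<in> complex_of_real ` {-1..1}"
    by (rule sq_one_eigen[OF Am_carrier Am_sq[OF assms(2)]])
qed

lemma GG: "a < 2^d \<Longrightarrow> k < d \<Longrightarrow> (\<Sum>b\<in>{0..<2^d}. G k a b * G l a b) = (if k = l then 1 else 0)"
proof -
  assume a: "a < 2^d" and k: "k < d"
  have "(\<Sum>b\<in>{0..<2^d}. G k a b * G l a b) = sg k a * G l a (flip_bit k a)"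
    by (rule sum_G[OF a k])
  also have "\<dots> = (if k = l then 1 else 0)"
    unfolding G_def using flip_inj[of k a l] by auto
  finally show ?thesis .
qed

lemma Am_inner:
  "(\<Sum>a\<in>{0..<2^d}. \<Sum>b\<in>{0..<2^d}. Am d u $$ (a,b) * Am d v $$ (a,b)) = of_nat (2^d) * (\<Sum>k<d. u k * v k)"
proof -
  have "(\<Sum>a\<in>{0..<2^d}. \<Sum>b\<in>{0..<2^d}. Am d u $$ (a,b) * Am d v $$ (a,b))
      = (\<Sum>a\<in>{0..<2^d}. \<Sum>b\<in>{0..<2^d}. \<Sum>k<d. \<Sum>l<d. u k * v l * (G k a b * G l a b))"
    by (intro sum.cong refl) (simp add: Am_def, subst sum_product, intro sum.cong refl, simp add: mult_ac)
  also have "\<dots> = (\<Sum>a\<in>{0..<2^d}. \<Sum>k<d. \<Sum>l<d. \<Sum>b\<in>{0..<2^d}. u k * v l * (G k a b * G l a b))"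
  proof (rule sum.cong[OF refl])
    fix a :: nat
    have "(\<Sum>b\<in>{0..<2^d}. \<Sum>k<d. \<Sum>l<d. u k * v l * (G k a b * G l a b))
        = (\<Sum>k<d. \<Sum>b\<in>{0..<2^d}. \<Sum>l<d. u k * v l * (G k a b * G l a b))" by (rule sum.swap)
    also have "\<dots> = (\<Sum>k<d. \<Sum>l<d. \<Sum>b\<in>{0..<2^d}. u k * v l * (G k a b * G l a b))"
      by (rule sum.cong[OF refl]) (rule sum.swap)
    finally show "(\<Sum>b\<in>{0..<2^d}. \<Sum>k<d. \<Sum>l<d. u k * v l * (G k a b * G l a b))
        = (\<Sum>k<d. \<Sum>l<d. \<Sum>b\<in>{0..<2^d}. u k * v l * (G k a b * G l a b))" .
  qed
  also have "\<dots> = (\<Sum>a\<in>{0..<(2::nat)^d}. \<Sum>k<d. u k * v k)"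
  proof (rule sum.cong[OF refl])
    fix a :: nat assume a: "a \<in> {0..<2^d}"
    have "(\<Sum>l<d. \<Sum>b\<in>{0..<2^d}. u k * v l * (G k a b * G l a b)) = u k * v k" if k: "k < d" for k
    proof -
      have "(\<Sum>l<d. \<Sum>b\<in>{0..<2^d}. u k * v l * (G k a b * G l a b))
          = (\<Sum>l<d. u k * v l * (\<Sum>b\<in>{0..<2^d}. G k a b * G l a b))"
        by (rule sum.cong[OF refl]) (rule sum_distrib_left[symmetric])
      also have "\<dots> = (\<Sum>l<d. if k = l then u k * v l else 0)"
        using a k by (intro sum.cong refl) (simp add: GG)
      also have "\<dots> = u k * v k" using k by (simp add: sum.delta)
      finally show ?thesis .
    qed
    then show "(\<Sum>k<d. \<Sum>l<d. \<Sum>b\<in>{0..<2^d}. u k * v l * (G k a b * G l a b)) = (\<Sum>k<d. u k * v k)"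
      by (intro sum.cong) auto
  qed
  also have "\<dots> = of_nat (2^d) * (\<Sum>k<d. u k * v k)" by simp
  finally show ?thesis .
qed

definition rho :: "nat \<Rightarrow> complex mat" where
  "rho N = mat (N*N) (N*N) (\<lambda>(p,q). if p div N = p mod N \<and> q div N = q mod N then 1 / of_nat N else 0)"

lemma diag_sum:
  fixes F :: "nat \<Rightarrow> complex"
  assumes N: "0 < N"
  shows "(\<Sum>p\<in>{0..<N*N}. if p div N = p mod N then F p else 0) = (\<Sum>a\<in>{0..<N}. F (a*N+a))"
proof -
  have "(\<Sum>p\<in>{0..<N*N}. if p div N = p mod N then F p else 0) = sum F {p\<in>{0..<N*N}. p div N = p mod N}"
    by (rule sum.inter_filter[symmetric]) simp
  also have "{p\<in>{0..<N*N}. p div N = p mod N} = (\<lambda>a. a*N+a) ` {0..<N}"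
  proof
    show "{p\<in>{0..<N*N}. p div N = p mod N} \<subseteq> (\<lambda>a. a*N+a) ` {0..<N}"
    proof
      fix p assume p: "p \<in> {p\<in>{0..<N*N}. p div N = p mod N}"
      then have "p = (p mod N) * N + p mod N" using div_mult_mod_eq[of p N] by simp
      moreover have "p mod N \<in> {0..<N}" using N by simp
      ultimately show "p \<in> (\<lambda>a. a*N+a) ` {0..<N}" by blast
    qed
    show "(\<lambda>a. a*N+a) ` {0..<N} \<subseteq> {p\<in>{0..<N*N}. p div N = p mod N}"
    proof
      fix p assume "p \<in> (\<lambda>a. a*N+a) ` {0..<N}"
      then obtain a where a: "a < N" and p: "p = a*N+a" by auto
      have "a*N + a < a*N + N" using a by simp
      also have "\<dots> = (a+1)*N" by simp
      also have "\<dots> \<le> N*N" using a by (intro mult_right_mono) auto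
      finally have "p < N*N" using p by simp
      moreover have "p div N = a" "p mod N = a" using a N p by simp_all
      ultimately show "p \<in> {p\<in>{0..<N*N}. p div N = p mod N}" by simp
    qed
  qed
  also have "sum F ((\<lambda>a. a*N+a) ` {0..<N}) = (\<Sum>a\<in>{0..<N}. F (a*N+a))"
  proof (rule sum.reindex[unfolded comp_def])
    show "inj_on (\<lambda>a. a*N+a) {0..<N}"
    proof (rule inj_onI)
      fix a b assume "a \<in> {0..<N}" "b \<in> {0..<N}" "a*N+a = b*N+b"
      then show "a = b" by (metis atLeastLessThan_iff mod_mult_self3 mod_less)
    qed
  qed
  finally show ?thesis .
qed

lemma rho_carrier: "rho N \<in> carrier_mat (N*N) (N*N)" unfolding rho_def by simp

lemma rho_trace: "0 < N \<Longrightarrow> mat_trace (rho N) = 1"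
proof -
  assume N: "0 < N"
  have "mat_trace (rho N) = (\<Sum>p\<in>{0..<N*N}. if p div N = p mod N then 1 / of_nat N else 0)"
    unfolding mat_trace_def rho_def by (simp add: atLeast0LessThan)
  also have "\<dots> = (\<Sum>a\<in>{0..<N}. (1::complex) / of_nat N)" using diag_sum[OF N, of "\<lambda>_. 1 / of_nat N"] by simp
  also have "\<dots> = 1" using N by simp
  finally show ?thesis .
qed

lemma rho_density: "0 < N \<Longrightarrow> density_mat (N*N) (rho N)"
proof -
  assume N: "0 < N"
  have herm: "hermitian_mat (rho N)"
    by (rule herm_I[OF rho_carrier]) (auto simp: rho_def)
  have pos: "conjugate v \<bullet> (rho N *\<^sub>v v) \<in> complex_of_real ` {0..}" if v: "v \<in> carrier_vec (N*N)" for v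
  proof -
    define w where "w = (\<Sum>q\<in>{0..<N*N}. if q div N = q mod N then v $ q else 0)"
    have rv: "(rho N *\<^sub>v v) $ p = (if p div N = p mod N then w / of_nat N else 0)" if p: "p < N*N" for p
    proof -
      have "(rho N *\<^sub>v v) $ p = (\<Sum>q\<in>{0..<N*N}. (if p div N = p mod N \<and> q div N = q mod N then 1 / of_nat N else 0) * v $ q)"
        using p v unfolding rho_def by (simp add: scalar_prod_def)
      also have "\<dots> = (if p div N = p mod N then w / of_nat N else 0)"
        unfolding w_def by (auto simp: sum_divide_distrib intro!: sum.cong)
      finally show ?thesis .
    qed
    have "conjugate v \<bullet> (rho N *\<^sub>v v) = (\<Sum>p\<in>{0..<N*N}. cnj (v $ p) * (rho N *\<^sub>v v) $ p)"
      using v unfolding scalar_prod_def by (simp add: rho_def)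
    also have "\<dots> = (\<Sum>p\<in>{0..<N*N}. if p div N = p mod N then cnj (v $ p) * w / of_nat N else 0)"
      by (rule sum.cong) (auto simp: rv)
    also have "\<dots> = (\<Sum>p\<in>{0..<N*N}. (if p div N = p mod N then cnj (v $ p) else 0) * (w / of_nat N))"
      by (rule sum.cong) auto
    also have "\<dots> = (\<Sum>p\<in>{0..<N*N}. (if p div N = p mod N then cnj (v $ p) else 0)) * (w / of_nat N)"
      by (rule sum_distrib_right[symmetric])
    also have "(\<Sum>p\<in>{0..<N*N}. (if p div N = p mod N then cnj (v $ p) else 0)) = cnj w"
      unfolding w_def cnj_sum by (rule sum.cong) auto
    also have "cnj w * (w / of_nat N) = cnj w * w / of_nat N" by simp
    also have "\<dots> = complex_of_real ((norm w)^2 / real N)"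
      using complex_norm_square[of w] by (simp add: mult.commute)
    finally have e: "conjugate v \<bullet> (rho N *\<^sub>v v) = complex_of_real ((norm w)^2 / real N)" .
    show ?thesis unfolding e by (rule image_eqI[OF refl]) simp
  qed
  show ?thesis unfolding density_mat_def psd_mat_def
    using rho_carrier herm pos rho_trace[OF N] by blast
qed

lemma diag_less: "a < (N::nat) \<Longrightarrow> a*N + a < N*N"
proof -
  assume a: "a < N"
  have "a*N + a < a*N + N" using a by simp
  also have "\<dots> = (a+1)*N" by simp
  also have "\<dots> \<le> N*N" using a by (intro mult_right_mono) auto
  finally show ?thesis .
qed

lemma trace_rho_kron:
  fixes A B :: "complex mat"
  assumes N: "0 < N" and A: "A \<in> carrier_mat N N" and B: "B \<in> carrier_mat N N"
  shows "mat_trace (rho N * kron A B) = (\<Sum>a\<in>{0..<N}. \<Sum>b\<in>{0..<N}. A $$ (a,b) * B $$ (a,b)) / of_nat N"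
proof -
  define K where "K = kron A B"
  have Kc: "K \<in> carrier_mat (N*N) (N*N)" using A B unfolding K_def kron_def by auto
  have Ki: "K $$ (q,p) = A $$ (q div N, p div N) * B $$ (q mod N, p mod N)" if "q < N*N" "p < N*N" for q p
    using that A B unfolding K_def kron_def by auto
  have ab: "(a*N+a) div N = a" "(a*N+a) mod N = a" if "a < N" for a using that N by simp_all
  have "mat_trace (rho N * K) = (\<Sum>p\<in>{0..<N*N}. \<Sum>q\<in>{0..<N*N}. rho N $$ (p,q) * K $$ (q,p))"
    unfolding mat_trace_def using Kc by (intro sum.cong) (auto simp: rho_def scalar_prod_def atLeast0LessThan)
  also have "\<dots> = (\<Sum>p\<in>{0..<N*N}. if p div N = p mod N then (\<Sum>q\<in>{0..<N*N}. if q div N = q mod N then K $$ (q,p) / of_nat N else 0) else 0)"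
    by (intro sum.cong refl) (auto simp: rho_def intro!: sum.cong)
  also have "\<dots> = (\<Sum>b\<in>{0..<N}. \<Sum>q\<in>{0..<N*N}. if q div N = q mod N then K $$ (q,b*N+b) / of_nat N else 0)"
    by (rule diag_sum[OF N])
  also have "\<dots> = (\<Sum>b\<in>{0..<N}. \<Sum>a\<in>{0..<N}. K $$ (a*N+a,b*N+b) / of_nat N)"
    by (rule sum.cong[OF refl]) (rule diag_sum[OF N])
  also have "\<dots> = (\<Sum>b\<in>{0..<N}. \<Sum>a\<in>{0..<N}. A $$ (a,b) * B $$ (a,b) / of_nat N)"
  proof (intro sum.cong refl)
    fix a b assume a: "a \<in> {0..<N}" and b: "b \<in> {0..<N}"
    have "a*N + a < N*N" "b*N+b < N*N"
      using a b diag_less by auto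
    then show "K $$ (a*N+a,b*N+b) / of_nat N = A $$ (a,b) * B $$ (a,b) / of_nat N"
      using Ki ab a b by simp
  qed
  also have "\<dots> = (\<Sum>a\<in>{0..<N}. \<Sum>b\<in>{0..<N}. A $$ (a,b) * B $$ (a,b)) / of_nat N"
    by (subst sum.swap) (simp add: sum_divide_distrib)
  finally show ?thesis unfolding K_def .
qed

lemma initial_seg:
  fixes S :: "real mat"
  assumes mono: "\<forall>i j. i \<le> j \<longrightarrow> j < m \<longrightarrow> S $$ (j,j) \<le> S $$ (i,i)"
    and d: "d = card {i. i < m \<and> S $$ (i,i) = S $$ (0,0)}" and k: "k < d"
  shows "S $$ (k,k) = S $$ (0,0)" "k < m"
proof -
  let ?P = "{i. i < m \<and> S $$ (i,i) = S $$ (0,0)}"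
  have "?P \<subseteq> {..<m}" by auto
  then have dm: "d \<le> m" using d card_mono[OF finite_lessThan[of m]] by simp
  then show km: "k < m" using k by simp
  show "S $$ (k,k) = S $$ (0,0)"
  proof (rule ccontr)
    assume ne: "S $$ (k,k) \<noteq> S $$ (0,0)"
    have "?P \<subseteq> {..<k}"
    proof
      fix i assume i: "i \<in> ?P"
      show "i \<in> {..<k}"
      proof (rule ccontr)
        assume "i \<notin> {..<k}"
        then have ki: "k \<le> i" by simp
        have "S $$ (i,i) \<le> S $$ (k,k)" using mono[rule_format, OF ki] i by blast
        moreover have "S $$ (k,k) \<le> S $$ (0,0)" using mono km by auto
        ultimately show False using i ne by auto
      qed
    qed
    then have "d \<le> k" using d card_mono[OF finite_lessThan[of k]] by simp
    then show False using k by simp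
  qed
qed

theorem corollary1:
  fixes M1 M2 :: nat and g V S W :: "real mat" and d :: nat
  assumes g: "g \<in> carrier_mat M1 M2" and gnz: "g \<noteq> 0\<^sub>m M1 M2"
    and svd: "is_svd M1 M2 g V S W"
    and d: "d = card {i. i < min M1 M2 \<and> S $$ (i,i) = S $$ (0,0)}"
    and rowsV: "\<forall>i<M1. row_norm_first d V i = sqrt (real d / real M1)"
    and rowsW: "\<forall>j<M2. row_norm_first d W j = sqrt (real d / real M2)"
  shows "\<exists>n1 n2 :: nat. \<exists>\<rho> :: complex mat. \<exists>A1 A2 :: nat \<Rightarrow> complex mat.
           density_mat (n1 * n2) \<rho> \<and>
           (\<forall>x1<M1. observable n1 (A1 x1)) \<and> (\<forall>x2<M2. observable n2 (A2 x2)) \<and>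
           (\<Sum>x1<M1. \<Sum>x2<M2. complex_of_real (g $$ (x1,x2)) * mat_trace (\<rho> * kron (A1 x1) (A2 x2)))
             = complex_of_real (sqrt (real M1 * real M2) * S $$ (0,0))"
proof -
  have M1: "0 < M1"
  proof (rule ccontr)
    assume "\<not> 0 < M1"
    then have "g = 0\<^sub>m M1 M2" using g by (intro eq_matI) auto
    with gnz show False by simp
  qed
  have M2: "0 < M2"
  proof (rule ccontr)
    assume "\<not> 0 < M2"
    then have "g = 0\<^sub>m M1 M2" using g by (intro eq_matI) auto
    with gnz show False by simp
  qed
  have oV: "orthogonal_real_mat M1 V" and oW: "orthogonal_real_mat M2 W" and Sc: "S \<in> carrier_mat M1 M2"
    and mono: "\<forall>i j. i \<le> j \<longrightarrow> j < min M1 M2 \<longrightarrow> S $$ (j,j) \<le> S $$ (i,i)"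
    and gdef: "g = V * S * transpose_mat W"
    using svd unfolding is_svd_def by auto
  have Vc: "V \<in> carrier_mat M1 M1" and VV: "transpose_mat V * V = 1\<^sub>m M1"
    using oV unfolding orthogonal_real_mat_def by auto
  have Wc: "W \<in> carrier_mat M2 M2" and WW: "transpose_mat W * W = 1\<^sub>m M2"
    using oW unfolding orthogonal_real_mat_def by auto
  have Skk: "S $$ (k,k) = S $$ (0,0)" and kM: "k < min M1 M2" if "k < d" for k
    using initial_seg[OF mono d that] by auto
  have dpos: "0 < d"
  proof -
    have "0 \<in> {i. i < min M1 M2 \<and> S $$ (i,i) = S $$ (0,0)}" using M1 M2 by simp
    moreover have "finite {i. i < min M1 M2 \<and> S $$ (i,i) = S $$ (0,0)}"
      by (rule finite_subset[of _ "{..<min M1 M2}"]) auto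
    ultimately show ?thesis unfolding d using card_gt_0_iff by blast
  qed
  have VgW: "transpose_mat V * g * W = S"
  proof -
    have VT: "transpose_mat V \<in> carrier_mat M1 M1" using Vc by simp
    have WT: "transpose_mat W \<in> carrier_mat M2 M2" using Wc by simp
    have SW: "S * transpose_mat W \<in> carrier_mat M1 M2" using Sc WT by simp
    have "transpose_mat V * g = transpose_mat V * (V * (S * transpose_mat W))"
      unfolding gdef by (simp only: assoc_mult_mat[OF Vc Sc WT])
    also have "\<dots> = (transpose_mat V * V) * (S * transpose_mat W)"
      by (rule assoc_mult_mat[OF VT Vc SW, symmetric])
    also have "\<dots> = S * transpose_mat W" unfolding VV by (rule left_mult_one_mat[OF SW])
    finally have 1: "transpose_mat V * g = S * transpose_mat W" .
    have "transpose_mat V * g * W = S * transpose_mat W * W" unfolding 1 ..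
    also have "\<dots> = S * (transpose_mat W * W)" by (rule assoc_mult_mat[OF Sc WT Wc])
    also have "\<dots> = S" unfolding WW by (rule right_mult_one_mat[OF Sc])
    finally show ?thesis .
  qed
  have diagsum: "(\<Sum>x1<M1. \<Sum>x2<M2. V $$ (x1,k) * g $$ (x1,x2) * W $$ (x2,k)) = S $$ (0,0)" if k: "k < d" for k
  proof -
    have k1: "k < M1" and k2: "k < M2" using kM[OF k] by auto
    have "S $$ (k,k) = (transpose_mat V * g * W) $$ (k,k)" using VgW by simp
    also have "\<dots> = (\<Sum>i<M1. V $$ (i, k) * (\<Sum>ia<M2. g $$ (i, ia) * W $$ (ia, k)))"
      using k1 k2 Vc Wc g by (simp add: scalar_prod_def atLeast0LessThan)
    also have "\<dots> = (\<Sum>x1<M1. \<Sum>x2<M2. V $$ (x1,k) * g $$ (x1,x2) * W $$ (x2,k))"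
      by (simp add: sum_distrib_left mult.assoc)
    finally show ?thesis using Skk[OF k] by simp
  qed
  define c1 where "c1 = sqrt (real M1 / real d)"
  define c2 where "c2 = sqrt (real M2 / real d)"
  define u where "u x k = complex_of_real (c1 * V $$ (x,k))" for x k
  define v where "v x k = complex_of_real (c2 * W $$ (x,k))" for x k
  have rowV: "(\<Sum>k<d. (V $$ (i,k))^2) = real d / real M1" if "i < M1" for i
    using rowsV that unfolding row_norm_first_def by auto
  have rowW: "(\<Sum>k<d. (W $$ (i,k))^2) = real d / real M2" if "i < M2" for i
    using rowsW that unfolding row_norm_first_def by auto
  have uu: "(\<Sum>k<d. u x k * u x k) = 1" if "x < M1" for x
  proof -
    have "(\<Sum>k<d. u x k * u x k) = complex_of_real (\<Sum>k<d. (c1 * V $$ (x,k)) * (c1 * V $$ (x,k)))"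
      by (simp only: u_def of_real_sum of_real_mult)
    also have "(\<Sum>k<d. (c1 * V $$ (x,k)) * (c1 * V $$ (x,k))) = c1^2 * (\<Sum>k<d. (V $$ (x,k))^2)"
      by (simp add: sum_distrib_left power2_eq_square algebra_simps)
    also have "c1^2 = real M1 / real d" unfolding c1_def by simp
    finally show ?thesis using rowV[OF that] M1 dpos by simp
  qed
  have vv: "(\<Sum>k<d. v x k * v x k) = 1" if "x < M2" for x
  proof -
    have "(\<Sum>k<d. v x k * v x k) = complex_of_real (\<Sum>k<d. (c2 * W $$ (x,k)) * (c2 * W $$ (x,k)))"
      by (simp only: v_def of_real_sum of_real_mult)
    also have "(\<Sum>k<d. (c2 * W $$ (x,k)) * (c2 * W $$ (x,k))) = c2^2 * (\<Sum>k<d. (W $$ (x,k))^2)"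
      by (simp add: sum_distrib_left power2_eq_square algebra_simps)
    also have "c2^2 = real M2 / real d" unfolding c2_def by simp
    finally show ?thesis using rowW[OF that] M2 dpos by simp
  qed
  have ur: "cnj (u x k) = u x k" for x k unfolding u_def by simp
  have vr: "cnj (v x k) = v x k" for x k unfolding v_def by simp
  define N where "N = (2::nat)^d"
  have N: "0 < N" unfolding N_def by simp
  have tr: "mat_trace (rho N * kron (Am d (u x1)) (Am d (v x2))) = (\<Sum>k<d. u x1 k * v x2 k)" for x1 x2
  proof -
    have "mat_trace (rho N * kron (Am d (u x1)) (Am d (v x2)))
        = (\<Sum>a\<in>{0..<N}. \<Sum>b\<in>{0..<N}. Am d (u x1) $$ (a,b) * Am d (v x2) $$ (a,b)) / of_nat N"
      by (rule trace_rho_kron[OF N]) (simp_all add: N_def Am_carrier)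
    also have "\<dots> = (\<Sum>k<d. u x1 k * v x2 k)"
      unfolding N_def Am_inner using N N_def by simp
    finally show ?thesis .
  qed
  have c12: "c1 * c2 * real d = sqrt (real M1 * real M2)"
  proof -
    have "c1 * c2 = sqrt (real M1 * real M2 / (real d * real d))"
      unfolding c1_def c2_def by (simp add: real_sqrt_mult[symmetric])
    also have "\<dots> = sqrt (real M1 * real M2) / real d"
      by (simp add: real_sqrt_divide real_sqrt_mult)
    finally show ?thesis using dpos by simp
  qed
  have final: "(\<Sum>x1<M1. \<Sum>x2<M2. complex_of_real (g $$ (x1,x2)) * (\<Sum>k<d. u x1 k * v x2 k))
      = complex_of_real (sqrt (real M1 * real M2) * S $$ (0,0))"
  proof -
    have "(\<Sum>x1<M1. \<Sum>x2<M2. complex_of_real (g $$ (x1,x2)) * (\<Sum>k<d. u x1 k * v x2 k))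
        = complex_of_real (\<Sum>x1<M1. \<Sum>x2<M2. g $$ (x1,x2) * (\<Sum>k<d. c1 * V $$ (x1,k) * (c2 * W $$ (x2,k))))"
      by (simp only: u_def v_def of_real_sum of_real_mult)
    also have "(\<Sum>x1<M1. \<Sum>x2<M2. g $$ (x1,x2) * (\<Sum>k<d. c1 * V $$ (x1,k) * (c2 * W $$ (x2,k))))
        = c1 * c2 * (\<Sum>k<d. \<Sum>x1<M1. \<Sum>x2<M2. V $$ (x1,k) * g $$ (x1,x2) * W $$ (x2,k))"
    proof -
      have "(\<Sum>x1<M1. \<Sum>x2<M2. g $$ (x1,x2) * (\<Sum>k<d. c1 * V $$ (x1,k) * (c2 * W $$ (x2,k))))
          = (\<Sum>x1<M1. \<Sum>x2<M2. \<Sum>k<d. c1 * c2 * (V $$ (x1,k) * g $$ (x1,x2) * W $$ (x2,k)))"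
        by (intro sum.cong refl) (simp add: sum_distrib_left mult_ac)
      also have "\<dots> = (\<Sum>x1<M1. \<Sum>k<d. \<Sum>x2<M2. c1 * c2 * (V $$ (x1,k) * g $$ (x1,x2) * W $$ (x2,k)))"
        by (rule sum.cong[OF refl]) (rule sum.swap)
      also have "\<dots> = (\<Sum>k<d. \<Sum>x1<M1. \<Sum>x2<M2. c1 * c2 * (V $$ (x1,k) * g $$ (x1,x2) * W $$ (x2,k)))"
        by (rule sum.swap)
      also have "\<dots> = c1 * c2 * (\<Sum>k<d. \<Sum>x1<M1. \<Sum>x2<M2. V $$ (x1,k) * g $$ (x1,x2) * W $$ (x2,k))"
        by (simp add: sum_distrib_left)
      finally show ?thesis .
    qed
    also have "(\<Sum>k<d. \<Sum>x1<M1. \<Sum>x2<M2. V $$ (x1,k) * g $$ (x1,x2) * W $$ (x2,k)) = (\<Sum>k<d. S $$ (0,0))"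
      by (rule sum.cong[OF refl]) (simp add: diagsum)
    also have "c1 * c2 * (\<Sum>k<d. S $$ (0,0)) = sqrt (real M1 * real M2) * S $$ (0,0)"
      using c12 by (simp add: mult.assoc[symmetric])
    finally show ?thesis .
  qed
  show ?thesis
  proof (intro exI conjI)
    show "density_mat (N * N) (rho N)" by (rule rho_density[OF N])
    show "\<forall>x1<M1. observable N (Am d (u x1))"
      unfolding N_def using Am_obs ur uu by blast
    show "\<forall>x2<M2. observable N (Am d (v x2))"
      unfolding N_def using Am_obs vr vv by blast
    show "(\<Sum>x1<M1. \<Sum>x2<M2. complex_of_real (g $$ (x1,x2)) * mat_trace (rho N * kron (Am d (u x1)) (Am d (v x2))))
        = complex_of_real (sqrt (real M1 * real M2) * S $$ (0,0))"
      unfolding tr by (rule final)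
  qed
qed

end
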